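(* Let $n,k\ge 0$ be integers, let $\mathbb{P}^{(n)}=\{I,X,Y,Z\}^{\otimes n}$ be the $n$-qubit Pauli operators (modulo phase), and let $\mathcal{T}_P^{(k)}$ be the multi-time Pauli twirl acting on operators $\Upsilon$ on $\mathcal{H}_{\Upsilon_{0:k}}=\bigotimes_{j=0}^k(\mathcal{H}_{\mathfrak{i}_j}\otimes\mathcal{H}_{\mathfrak{o}_j})$ (each factor an $n$-qubit space) by \[ \mathcal{T}_P^{(k)}(\Upsilon)=\frac{1}{|\mathbb{P}^{(n)}|^{k+1}}\sum_{P_0,\dots,P_k\in\mathbb{P}^{(n)}}\Big(\bigotimes_{j=0}^k P_j\otimes P_j\Big)\,\Upsilon\,\Big(\bigotimes_{j=0}^k P_j\otimes P_j\Big), \] where in the $j$-th factor the first $P_j$ acts on $\mathcal{H}_{\mathfrak{i}_j}$ and the second on $\mathcal{H}_{\mathfrak{o}_j}$. Then: (1) (Validity) for every Choi operator $\Upsilon_{0:k}$ of a valid (CPTP) $k$-slot process tensor, $\mathcal{T}_P^{(k)}(\Upsilon_{0:k})$ is again the Choi operator of a valid (CPTP) $k$-slot process tensor; (2) (Projector) $\mathcal{T}_P^{(k)}\circ\mathcal{T}_P^{(k)}=\mathcal{T}_P^{(k)}$; (3) (Causality) the causal (affine) constraints are preserved: if $\Upsilon_{0:k}$ satisfies the causal constraints below, so does $\mathcal{T}_P^{(k)}(\Upsilon_{0:k})$.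
   Context: A $k$-slot process tensor is described by its Choi operator $\Upsilon_{0:k}$, a linear operator on $\mathcal{H}_{\Upsilon_{0:k}}=\bigotimes_{j=0}^k(\mathcal{H}_{\mathfrak{i}_j}\otimes\mathcal{H}_{\mathfrak{o}_j})$, where $\mathcal{H}_{\mathfrak{i}_j},\mathcal{H}_{\mathfrak{o}_j}$ are the system input/output spaces at time step $j$. It is valid (CPTP) iff $\Upsilon_{0:k}\ge 0$ and it satisfies the causal constraints: there are operators $\Upsilon_{0:j}$ on $\bigotimes_{l=0}^{j}(\mathcal{H}_{\mathfrak{i}_l}\otimes\mathcal{H}_{\mathfrak{o}_l})$, $j=0,\dots,k$ (with $\Upsilon_{0:k}$ the given operator), such that $\mathrm{Tr}_{\mathfrak{o}_j}[\Upsilon_{0:j}]=\Upsilon_{0:j-1}\otimes\mathbb{I}_{\mathfrak{i}_j}$ for $j=1,\dots,k$ and $\mathrm{Tr}_{\mathfrak{o}_0}[\Upsilon_{0:0}]=\mathbb{I}_{\mathfrak{i}_0}$. Choi operators use the unnormalised maximally entangled vector $\sum_i|i\rangle|i\rangle$. *)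

theory Defs
  imports Complex_Main "Jordan_Normal_Form.Matrix" "Jordan_Normal_Form.Conjugate"
begin

text \<open>Kronecker (tensor) product of matrices; the first factor is the most significant one.\<close>
definition kron :: "complex mat \<Rightarrow> complex mat \<Rightarrow> complex mat" where
  "kron A B = mat (dim_row A * dim_row B) (dim_col A * dim_col B)
     (\<lambda>(i,j). A $$ (i div dim_row B, j div dim_col B) * B $$ (i mod dim_row B, j mod dim_col B))"

definition ptrace_last :: "nat \<Rightarrow> complex mat \<Rightarrow> complex mat" where
  "ptrace_last d A = mat (dim_row A div d) (dim_col A div d)
     (\<lambda>(i,j). \<Sum>l<d. A $$ (i * d + l, j * d + l))"

definition psd :: "complex mat \<Rightarrow> bool" where
  "psd A \<longleftrightarrow> (\<exists>m. A \<in> carrier_mat m m \<and>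
     (\<forall>v \<in> carrier_vec m. (conjugate v \<bullet> (A *\<^sub>v v)) \<in> \<real> \<and> 0 \<le> Re ((conjugate v \<bullet> (A *\<^sub>v v)))))"

text \<open>Single-qubit Paulis: 0 = I, 1 = X, 2 = Y, 3 = Z.\<close>
definition pauli1 :: "nat \<Rightarrow> complex mat" where
  "pauli1 p = (if p = 0 then mat_of_rows_list 2 [[1,0],[0,1]]
     else if p = 1 then mat_of_rows_list 2 [[0,1],[1,0]]
     else if p = 2 then mat_of_rows_list 2 [[0,-\<i>],[\<i>,0]]
     else mat_of_rows_list 2 [[1,0],[0,-1]])"

definition pauli_string :: "nat list \<Rightarrow> complex mat" where
  "pauli_string ps = foldr (\<lambda>p M. kron (pauli1 p) M) ps (1\<^sub>m 1)"

text \<open>The n-qubit Pauli operators (one representative per phase class).\<close>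
definition paulis :: "nat \<Rightarrow> complex mat set" where
  "paulis n = {pauli_string ps | ps. length ps = n \<and> set ps \<subseteq> {..<4}}"

text \<open>Qubit dimension of one system space, and of H_{Upsilon_{0:j}}
  = (H_i0 (x) H_o0) (x) ... (x) (H_ij (x) H_oj).\<close>
definition sysdim :: "nat \<Rightarrow> nat" where "sysdim n = 2 ^ n"
definition ptdim :: "nat \<Rightarrow> nat \<Rightarrow> nat" where
  "ptdim n j = (sysdim n * sysdim n) ^ (Suc j)"

definition twirl_op :: "complex mat list \<Rightarrow> complex mat" where
  "twirl_op Ps = foldr (\<lambda>P M. kron (kron P P) M) Ps (1\<^sub>m 1)"

definition pauli_twirl :: "nat \<Rightarrow> nat \<Rightarrow> complex mat \<Rightarrow> complex mat" where
  "pauli_twirl n k U = mat (ptdim n k) (ptdim n k) (\<lambda>(a,b).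
     (1 / of_nat (card (paulis n) ^ Suc k)) *
     (\<Sum>Ps \<in> {Ps. length Ps = Suc k \<and> set Ps \<subseteq> paulis n}.
        (twirl_op Ps * U * twirl_op Ps) $$ (a,b)))"

definition causal :: "nat \<Rightarrow> nat \<Rightarrow> complex mat \<Rightarrow> bool" where
  "causal n k U \<longleftrightarrow> (\<exists>Ups :: nat \<Rightarrow> complex mat.
     Ups k = U \<and>
     (\<forall>j\<le>k. Ups j \<in> carrier_mat (ptdim n j) (ptdim n j)) \<and>
     ptrace_last (sysdim n) (Ups 0) = 1\<^sub>m (sysdim n) \<and>
     (\<forall>j. 1 \<le> j \<and> j \<le> k \<longrightarrow>
        ptrace_last (sysdim n) (Ups j) = kron (Ups (j - 1)) (1\<^sub>m (sysdim n))))"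

definition valid_process_tensor :: "nat \<Rightarrow> nat \<Rightarrow> complex mat \<Rightarrow> bool" where
  "valid_process_tensor n k U \<longleftrightarrow> psd U \<and> causal n k U"

end

theory Submission
  imports Defs
begin

lemma sum_shift_ivl: "sum f {c..<c+d} = (\<Sum>b<d. f (c+b :: nat))"
  by (induction d) (simp_all add: add.commute)

lemma sum_split_mult:
  "((\<Sum>x<m*d. f x) :: 'a::comm_monoid_add) = (\<Sum>a<m. \<Sum>b<d. f (a*d+b :: nat))"
proof (induction m)
  case 0 then show ?case by simp
next
  case (Suc m)
  have "{..<Suc m * d} = {..<m*d} \<union> {m*d..<m*d+d}" by (auto simp: algebra_simps)
  then have "(\<Sum>x<Suc m*d. f x) = (\<Sum>x<m*d. f x) + (\<Sum>x\<in>{m*d..<m*d+d}. f x)"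
    by (simp add: sum.union_disjoint ivl_disj_int)
  also have "(\<Sum>x\<in>{m*d..<m*d+d}. f x) = (\<Sum>b<d. f (m*d+b))"
    by (rule sum_shift_ivl)
  finally show ?case using Suc by simp
qed

lemma idx_lt: "a < (m::nat) \<Longrightarrow> b < d \<Longrightarrow> a*d+b < m*d"
proof -
  assume "a < m" "b < d"
  then have "a*d+b < (a+1)*d" by simp
  also have "\<dots> \<le> m*d" using \<open>a<m\<close> by (intro mult_le_mono1) simp
  finally show ?thesis .
qed

lemma div_mod_lt: "i < a*(b::nat) \<Longrightarrow> i div b < a \<and> i mod b < b"
proof -
  assume h: "i < a*b"
  then have "b > 0" by (cases b) auto
  with h show ?thesis by (simp add: div_less_iff_less_mult)
qed

lemma kron_dim[simp]: "dim_row (kron A B) = dim_row A * dim_row B" "dim_col (kron A B) = dim_col A * dim_col B"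
  unfolding kron_def by (rule dim_row_mat, rule dim_col_mat)
lemma kron_carrier: "A \<in> carrier_mat a b \<Longrightarrow> B \<in> carrier_mat c d \<Longrightarrow> kron A B \<in> carrier_mat (a*c) (b*d)"
  by (intro carrier_matI) auto
lemma kron_index[simp]: "i < dim_row A * dim_row B \<Longrightarrow> j < dim_col A * dim_col B \<Longrightarrow>
  kron A B $$ (i,j) = A $$ (i div dim_row B, j div dim_col B) * B $$ (i mod dim_row B, j mod dim_col B)"
  unfolding kron_def by (subst index_mat) simp_all

lemma kron_mult:
  assumes A: "A \<in> carrier_mat a1 a2" and B: "B \<in> carrier_mat b1 b2"
    and C: "C \<in> carrier_mat a2 a3" and D: "D \<in> carrier_mat b2 b3"
  shows "kron A B * kron C D = kron (A*C) (B*D)"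
proof (rule eq_matI)
  fix i j assume i: "i < dim_row (kron (A*C) (B*D))" and j: "j < dim_col (kron (A*C) (B*D))"
  from i j A B C D have i1: "i < a1*b1" and j1: "j < a3*b3" by auto
  have b1: "b1 > 0" and b3: "b3 > 0" using i1 j1 by (auto intro: ccontr)
  have id: "i div b1 < a1" "i mod b1 < b1" "j div b3 < a3" "j mod b3 < b3"
    using i1 j1 b1 b3 by (auto simp: less_mult_imp_div_less mult.commute)
  have "(kron A B * kron C D) $$ (i,j) = (\<Sum>x<a2*b2. kron A B $$ (i,x) * kron C D $$ (x,j))"
    using A B C D i1 j1 by (simp add: scalar_prod_def row_def col_def lessThan_atLeast0)
  also have "\<dots> = (\<Sum>a<a2. \<Sum>b<b2. kron A B $$ (i,a*b2+b) * kron C D $$ (a*b2+b,j))"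
    by (rule sum_split_mult)
  also have "\<dots> = (\<Sum>a<a2. \<Sum>b<b2. (A $$ (i div b1, a) * C $$ (a, j div b3)) * (B $$ (i mod b1, b) * D $$ (b, j mod b3)))"
  proof (intro sum.cong refl)
    fix a b assume a: "a \<in> {..<a2}" and b: "b \<in> {..<b2}"
    have lt: "a*b2+b < a2*b2" using a b idx_lt by auto
    show "kron A B $$ (i,a*b2+b) * kron C D $$ (a*b2+b,j) = (A $$ (i div b1, a) * C $$ (a, j div b3)) * (B $$ (i mod b1, b) * D $$ (b, j mod b3))"
      using A B C D i1 j1 lt a b by (simp add: algebra_simps)
  qed
  also have "\<dots> = (\<Sum>a<a2. A $$ (i div b1, a) * C $$ (a, j div b3)) * (\<Sum>b<b2. B $$ (i mod b1, b) * D $$ (b, j mod b3))"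
    by (simp add: sum_product)
  also have "\<dots> = kron (A*C) (B*D) $$ (i,j)"
    using A B C D i1 j1 id by (simp add: scalar_prod_def row_def col_def lessThan_atLeast0)
  finally show "(kron A B * kron C D) $$ (i,j) = kron (A*C) (B*D) $$ (i,j)" .
qed (use A B C D in auto)

lemma mod_div_swap: "(c::nat) > 0 \<Longrightarrow> i mod (b*c) div c = i div c mod b"
proof -
  assume c: "c > 0"
  have "i mod (b*c) = c * (i div c mod b) + i mod c" by (subst mult.commute) (rule mod_mult2_eq)
  then show ?thesis using c by simp
qed

lemma pos_of_lt_mult: "i < a*(b::nat) \<Longrightarrow> 0 < a \<and> 0 < b"
  by (cases a; cases b) auto

lemma kron_assoc: "kron (kron A B) C = kron A (kron B C)"
proof (rule eq_matI)
  fix i j assume i: "i < dim_row (kron A (kron B C))" and j: "j < dim_col (kron A (kron B C))"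
  let ?rB = "dim_row B" and ?rC = "dim_row C" and ?cB = "dim_col B" and ?cC = "dim_col C"
  have i0: "i < dim_row A * (?rB * ?rC)" and j0: "j < dim_col A * (?cB * ?cC)" using i j by (simp_all only: kron_dim)
  have i1: "i < dim_row A * ?rB * ?rC" and j1: "j < dim_col A * ?cB * ?cC" using i0 j0 by (simp_all only: mult.assoc)
  have pr: "0 < ?rB * ?rC" using pos_of_lt_mult[OF i0] by (rule conjunct2)
  have pc: "0 < ?cB * ?cC" using pos_of_lt_mult[OF j0] by (rule conjunct2)
  have p: "?rB > 0" "?rC > 0" "?cB > 0" "?cC > 0"
    using pos_of_lt_mult[of 0 ?rB ?rC] pos_of_lt_mult[of 0 ?cB ?cC] pr pc by blast+
  have i2: "i div ?rC < dim_row A * ?rB" using div_mod_lt[OF i1] by (rule conjunct1)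
  have j2: "j div ?cC < dim_col A * ?cB" using div_mod_lt[OF j1] by (rule conjunct1)
  have e1: "i div (?rB * ?rC) = i div ?rC div ?rB" "j div (?cB * ?cC) = j div ?cC div ?cB"
    by (subst mult.commute, rule div_mult2_eq)+
  have e2: "i mod (?rB * ?rC) div ?rC = i div ?rC mod ?rB" "j mod (?cB * ?cC) div ?cC = j div ?cC mod ?cB"
    using p by (simp_all add: mod_div_swap)
  have e3: "i mod (?rB * ?rC) mod ?rC = i mod ?rC" "j mod (?cB * ?cC) mod ?cC = j mod ?cC"
    by (simp_all only: mod_mod_cancel dvd_triv_right)
  have m1: "i mod (?rB * ?rC) < ?rB * ?rC" "j mod (?cB * ?cC) < ?cB * ?cC"
    using mod_less_divisor[OF pr] mod_less_divisor[OF pc] by blast+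
  have L: "kron (kron A B) C $$ (i,j) = (A $$ (i div ?rC div ?rB, j div ?cC div ?cB) * B $$ (i div ?rC mod ?rB, j div ?cC mod ?cB)) * C $$ (i mod ?rC, j mod ?cC)"
    using i1 j1 i2 j2 by (simp only: kron_index kron_dim)
  have R: "kron A (kron B C) $$ (i,j) = A $$ (i div (?rB*?rC), j div (?cB*?cC)) * (B $$ (i mod (?rB*?rC) div ?rC, j mod (?cB*?cC) div ?cC) * C $$ (i mod (?rB*?rC) mod ?rC, j mod (?cB*?cC) mod ?cC))"
    using i0 j0 m1 by (simp only: kron_index kron_dim)
  show "kron (kron A B) C $$ (i, j) = kron A (kron B C) $$ (i, j)"
    unfolding L R e1 e2 e3 by (simp only: mult.assoc)
qed (simp_all only: kron_dim mult.assoc)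

lemma kron_one_left: "kron (1\<^sub>m 1) A = A"
  by (rule eq_matI) auto

lemma kron_one_right: "kron A (1\<^sub>m 1) = A"
  by (rule eq_matI) auto

lemma kron_smult_left: "kron (c \<cdot>\<^sub>m A) B = c \<cdot>\<^sub>m kron A B"
  by (rule eq_matI) (auto dest!: div_mod_lt)

lemma kron_smult_right: "kron A (c \<cdot>\<^sub>m B) = c \<cdot>\<^sub>m kron A B"
  by (rule eq_matI) (auto dest!: div_mod_lt)

lemma kron_one_one: "kron (1\<^sub>m a) (1\<^sub>m b) = 1\<^sub>m (a*b)"
proof (rule eq_matI)
  fix i j assume "i < dim_row (1\<^sub>m (a*b))" "j < dim_col (1\<^sub>m (a*b))"
  then have ij: "i < a*b" "j < a*b" by auto
  then have p: "b > 0" by (auto intro: ccontr)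
  have "i div b < a" "j div b < a" using ij p by (auto simp: div_less_iff_less_mult)
  moreover have "(i div b = j div b \<and> i mod b = j mod b) = (i = j)"
    by (metis div_mult_mod_eq)
  ultimately show "kron (1\<^sub>m a) (1\<^sub>m b) $$ (i, j) = 1\<^sub>m (a*b) $$ (i, j)"
    using ij p by auto
qed auto

definition mtr :: "complex mat \<Rightarrow> complex" where "mtr A = (\<Sum>i<dim_row A. A $$ (i,i))"

lemma trace_kron: assumes "A \<in> carrier_mat a a" "B \<in> carrier_mat b b"
  shows "mtr (kron A B) = mtr A * mtr B"
proof -
  have "mtr (kron A B) = (\<Sum>x<a*b. kron A B $$ (x,x))"
    using assms by (simp add: mtr_def)
  also have "\<dots> = (\<Sum>x<a. \<Sum>y<b. kron A B $$ (x*b+y,x*b+y))" by (rule sum_split_mult)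
  also have "\<dots> = (\<Sum>x<a. \<Sum>y<b. A $$ (x,x) * B $$ (y,y))"
    using assms by (intro sum.cong refl) (simp add: idx_lt)
  also have "\<dots> = mtr A * mtr B"
    using assms by (simp add: mtr_def sum_product)
  finally show ?thesis .
qed


definition m2 :: "complex \<Rightarrow> complex \<Rightarrow> complex \<Rightarrow> complex \<Rightarrow> complex mat" where
  "m2 a b c d = mat_of_rows_list 2 [[a,b],[c,d]]"

lemma less2: "(i::nat) < 2 \<Longrightarrow> i = 0 \<or> i = 1" by auto

lemma m2_carrier: "m2 a b c d \<in> carrier_mat 2 2"
  unfolding m2_def mat_of_rows_list_def by (simp only: mat_carrier list.size numeral_2_eq_2) simp

lemma m2_dims[simp]: "dim_row (m2 a b c d) = 2" "dim_col (m2 a b c d) = 2"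
  using m2_carrier[of a b c d] by auto

lemma m2_index: "i < 2 \<Longrightarrow> j < 2 \<Longrightarrow> m2 a b c d $$ (i,j) = (if i = 0 then if j = 0 then a else b else if j = 0 then c else d)"
  unfolding m2_def mat_of_rows_list_def by (subst index_mat) (auto dest!: less2)

lemma m2_eq: "m2 a b c d = m2 a' b' c' d' \<longleftrightarrow> a = a' \<and> b = b' \<and> c = c' \<and> d = d'"
proof
  assume h: "m2 a b c d = m2 a' b' c' d'"
  have "m2 a b c d $$ (0,0) = m2 a' b' c' d' $$ (0,0)" "m2 a b c d $$ (0,1) = m2 a' b' c' d' $$ (0,1)"
    "m2 a b c d $$ (1,0) = m2 a' b' c' d' $$ (1,0)" "m2 a b c d $$ (1,1) = m2 a' b' c' d' $$ (1,1)"
    using h by simp_all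
  then show "a = a' \<and> b = b' \<and> c = c' \<and> d = d'" by (simp add: m2_index)
qed simp

lemma m2_mult: "m2 a b c d * m2 e f g h = m2 (a*e+b*g) (a*f+b*h) (c*e+d*g) (c*f+d*h)"
proof (rule eq_matI)
  fix i j assume "i < dim_row (m2 (a*e+b*g) (a*f+b*h) (c*e+d*g) (c*f+d*h))" "j < dim_col (m2 (a*e+b*g) (a*f+b*h) (c*e+d*g) (c*f+d*h))"
  then have ij: "i < 2" "j < 2" by simp_all
  have s2: "(\<Sum>x\<in>{0..<2::nat}. F x) = F 0 + F 1" for F :: "nat \<Rightarrow> complex"
    by (simp add: numeral_2_eq_2)
  show "(m2 a b c d * m2 e f g h) $$ (i, j) = m2 (a*e+b*g) (a*f+b*h) (c*e+d*g) (c*f+d*h) $$ (i, j)"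
    using ij by (simp add: scalar_prod_def s2 m2_index)
qed simp_all

lemma m2_smult: "x \<cdot>\<^sub>m m2 a b c d = m2 (x*a) (x*b) (x*c) (x*d)"
  by (rule eq_matI) (auto simp: m2_index)

lemma m2_one: "1\<^sub>m 2 = m2 1 0 0 1"
  by (rule eq_matI) (auto simp: m2_index dest!: less2)

lemma pauli1_m2: "pauli1 p = (if p = 0 then m2 1 0 0 1 else if p = 1 then m2 0 1 1 0
   else if p = 2 then m2 0 (-\<i>) \<i> 0 else m2 1 0 0 (-1))"
  unfolding pauli1_def m2_def by simp

definition pm :: "nat \<Rightarrow> nat \<Rightarrow> nat" where
  "pm p q = (if p = 0 then q else if q = 0 then p else if p = q then 0 else 6 - p - q)"
definition ph :: "nat \<Rightarrow> nat \<Rightarrow> complex" where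
  "ph p q = (if p = 0 \<or> q = 0 \<or> p = q then 1 else if (p = 1 \<and> q = 2) \<or> (p = 2 \<and> q = 3) \<or> (p = 3 \<and> q = 1) then \<i> else -\<i>)"

lemma less4: "(p::nat) < 4 \<Longrightarrow> p = 0 \<or> p = 1 \<or> p = 2 \<or> p = 3" by auto

lemma mtr_m2: "mtr (m2 a b c d) = a + d"
  by (simp add: mtr_def numeral_2_eq_2 m2_index)

lemma pauli1_mult: "p < 4 \<Longrightarrow> q < 4 \<Longrightarrow> pauli1 p * pauli1 q = ph p q \<cdot>\<^sub>m pauli1 (pm p q)"
  apply (drule less4)+
  apply (elim disjE)
  apply (simp_all add: pauli1_m2 m2_mult m2_smult m2_eq pm_def ph_def)
  done
lemma ph_sq: "p < 4 \<Longrightarrow> q < 4 \<Longrightarrow> (ph p q * ph q p)^2 = 1"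
  by (auto dest!: less4 simp: ph_def)

lemma pm_lt: "p < 4 \<Longrightarrow> q < 4 \<Longrightarrow> pm p q < 4"
  by (auto dest!: less4 simp: pm_def)

lemma pm_comm: "pm p q = pm q p"
  by (auto simp: pm_def)

lemma pauli1_sq: "pauli1 p * pauli1 p = 1\<^sub>m 2"
  by (auto simp: pauli1_m2 m2_mult m2_one m2_eq)

lemma pauli1_tr: "p < 4 \<Longrightarrow> q < 4 \<Longrightarrow> mtr (pauli1 p * pauli1 q) = (if p = q then 2 else 0)"
  by (auto dest!: less4 simp: pauli1_m2 m2_mult mtr_m2)

lemma pauli1_carrier: "pauli1 p \<in> carrier_mat 2 2"
  by (simp add: pauli1_m2 m2_carrier)

lemma pauli1_herm: "i < 2 \<Longrightarrow> j < 2 \<Longrightarrow> pauli1 p $$ (i,j) = cnj (pauli1 p $$ (j,i))"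
  by (auto dest!: less2 simp: pauli1_m2 m2_index)



lemma smult_smult_m: "a \<cdot>\<^sub>m (b \<cdot>\<^sub>m A) = (a * b :: complex) \<cdot>\<^sub>m A"
  by (rule eq_matI) auto

lemma one_smult_m: "1 \<cdot>\<^sub>m A = (A :: complex mat)"
  by (rule eq_matI) auto

lemma ps_Nil: "pauli_string [] = 1\<^sub>m 1" by (simp add: pauli_string_def)
lemma ps_Cons: "pauli_string (p#ps) = kron (pauli1 p) (pauli_string ps)" by (simp add: pauli_string_def)

lemma ps_carrier: "pauli_string ps \<in> carrier_mat (2^length ps) (2^length ps)"
proof (induction ps)
  case Nil then show ?case by (simp add: ps_Nil)
next
  case (Cons p ps)
  show ?case unfolding ps_Cons using kron_carrier[OF pauli1_carrier Cons] by simp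
qed

lemma ps_sq: "pauli_string ps * pauli_string ps = 1\<^sub>m (2^length ps)"
proof (induction ps)
  case Nil then show ?case by (simp add: ps_Nil)
next
  case (Cons p ps)
  have "pauli_string (p#ps) * pauli_string (p#ps) = kron (pauli1 p * pauli1 p) (pauli_string ps * pauli_string ps)"
    unfolding ps_Cons by (rule kron_mult[OF pauli1_carrier ps_carrier pauli1_carrier ps_carrier])
  also have "\<dots> = 1\<^sub>m (2^length (p#ps))" unfolding Cons pauli1_sq kron_one_one by simp
  finally show ?case .
qed

definition herm :: "complex mat \<Rightarrow> bool" where
  "herm A \<longleftrightarrow> (\<forall>i<dim_row A. \<forall>j<dim_row A. A $$ (i,j) = cnj (A $$ (j,i)))"

lemma herm_kron: assumes "A \<in> carrier_mat a a" "B \<in> carrier_mat b b" "herm A" "herm B"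
  shows "herm (kron A B)"
  unfolding herm_def
proof (intro allI impI)
  fix i j assume i: "i < dim_row (kron A B)" and j: "j < dim_row (kron A B)"
  have i1: "i < a*b" and j1: "j < a*b" using i j assms(1,2) by auto
  have b: "dim_row B = b" "dim_col B = b" using assms(2) by auto
  have ij: "i div b < a" "j div b < a" "i mod b < b" "j mod b < b" using div_mod_lt[OF i1] div_mod_lt[OF j1] by auto
  have hA: "A $$ (i div b, j div b) = cnj (A $$ (j div b, i div b))"
    using assms(3) ij assms(1) unfolding herm_def by blast
  have hB: "B $$ (i mod b, j mod b) = cnj (B $$ (j mod b, i mod b))"
    using assms(4) ij assms(2) unfolding herm_def by blast
  have k1: "kron A B $$ (i, j) = A $$ (i div b, j div b) * B $$ (i mod b, j mod b)"
    using i1 j1 assms(1,2) by (subst kron_index) auto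
  have k2: "kron A B $$ (j, i) = A $$ (j div b, i div b) * B $$ (j mod b, i mod b)"
    using i1 j1 assms(1,2) by (subst kron_index) auto
  show "kron A B $$ (i, j) = cnj (kron A B $$ (j, i))"
    unfolding k1 k2 hA hB by simp
qed

lemma herm_one: "herm (1\<^sub>m n)" unfolding herm_def by auto

lemma ps_herm: "herm (pauli_string ps)"
proof (induction ps)
  case Nil then show ?case by (simp add: ps_Nil herm_one)
next
  case (Cons p ps)
  have "herm (pauli1 p)" unfolding herm_def
  proof (intro allI impI)
    fix i j assume "i < dim_row (pauli1 p)" "j < dim_row (pauli1 p)"
    then show "pauli1 p $$ (i,j) = cnj (pauli1 p $$ (j,i))" using pauli1_carrier[of p] by (intro pauli1_herm) auto
  qed
  then show ?case unfolding ps_Cons using herm_kron[OF pauli1_carrier ps_carrier _ Cons] by blast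
qed

lemma ps_mult: "length qs = length ps \<Longrightarrow> set ps \<subseteq> {..<4} \<Longrightarrow> set qs \<subseteq> {..<4} \<Longrightarrow>
  \<exists>c c'. pauli_string ps * pauli_string qs = c \<cdot>\<^sub>m pauli_string (map2 pm ps qs) \<and>
         pauli_string qs * pauli_string ps = c' \<cdot>\<^sub>m pauli_string (map2 pm ps qs) \<and> (c*c')^2 = 1"
proof (induction ps arbitrary: qs)
  case Nil then show ?case by (intro exI[of _ 1]) (simp add: ps_Nil one_smult_m)
next
  case (Cons p ps)
  then obtain q qs' where qs: "qs = q # qs'" by (cases qs) auto
  have p: "p < 4" and q: "q < 4" and l: "length qs' = length ps" and s1: "set ps \<subseteq> {..<4}" and s2: "set qs' \<subseteq> {..<4}"
    using Cons.prems qs by auto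
  obtain c c' where c: "pauli_string ps * pauli_string qs' = c \<cdot>\<^sub>m pauli_string (map2 pm ps qs')"
    "pauli_string qs' * pauli_string ps = c' \<cdot>\<^sub>m pauli_string (map2 pm ps qs')" "(c*c')^2 = 1"
    using Cons.IH[OF l s1 s2] by blast
  have cq: "pauli_string qs' \<in> carrier_mat (2^length ps) (2^length ps)" using ps_carrier[of qs'] l by simp
  have cq': "pauli_string ps \<in> carrier_mat (2^length qs') (2^length qs')" using ps_carrier[of ps] l by simp
  have e1: "pauli_string (p#ps) * pauli_string qs = (ph p q * c) \<cdot>\<^sub>m pauli_string (map2 pm (p#ps) qs)"
  proof -
    have "pauli_string (p#ps) * pauli_string qs = kron (pauli1 p * pauli1 q) (pauli_string ps * pauli_string qs')"
      unfolding qs ps_Cons by (rule kron_mult[OF pauli1_carrier ps_carrier pauli1_carrier cq])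
    also have "\<dots> = (ph p q * c) \<cdot>\<^sub>m pauli_string (map2 pm (p#ps) qs)"
      unfolding pauli1_mult[OF p q] c(1) kron_smult_left kron_smult_right smult_smult_m qs by (simp add: ps_Cons mult.commute)
    finally show ?thesis .
  qed
  have e2: "pauli_string qs * pauli_string (p#ps) = (ph q p * c') \<cdot>\<^sub>m pauli_string (map2 pm (p#ps) qs)"
  proof -
    have "pauli_string qs * pauli_string (p#ps) = kron (pauli1 q * pauli1 p) (pauli_string qs' * pauli_string ps)"
      unfolding qs ps_Cons by (rule kron_mult[OF pauli1_carrier ps_carrier pauli1_carrier cq'])
    also have "\<dots> = (ph q p * c') \<cdot>\<^sub>m pauli_string (map2 pm (p#ps) qs)"
      unfolding pauli1_mult[OF q p] c(2) kron_smult_left kron_smult_right smult_smult_m qs by (simp add: ps_Cons pm_comm mult.commute)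
    finally show ?thesis .
  qed
  have "((ph p q * c) * (ph q p * c'))^2 = (ph p q * ph q p)^2 * (c*c')^2" by (simp add: power_mult_distrib algebra_simps)
  also have "\<dots> = 1" using ph_sq[OF p q] c(3) by simp
  finally show ?case using e1 e2 by blast
qed

lemma mtr_one: "mtr (1\<^sub>m n) = of_nat n" by (simp add: mtr_def)
lemma mtr_smult: "A \<in> carrier_mat n n \<Longrightarrow> mtr (c \<cdot>\<^sub>m A) = c * mtr A" unfolding mtr_def by (auto simp: sum_distrib_left intro!: sum.cong)

lemma ps_tr: "length qs = length ps \<Longrightarrow> set ps \<subseteq> {..<4} \<Longrightarrow> set qs \<subseteq> {..<4} \<Longrightarrow>
  mtr (pauli_string ps * pauli_string qs) = (if ps = qs then 2^length ps else 0)"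
proof (induction ps arbitrary: qs)
  case Nil then show ?case by (simp add: ps_Nil mtr_one)
next
  case (Cons p ps)
  then obtain q qs' where qs: "qs = q # qs'" by (cases qs) auto
  have p: "p < 4" and q: "q < 4" and l: "length qs' = length ps" and s1: "set ps \<subseteq> {..<4}" and s2: "set qs' \<subseteq> {..<4}"
    using Cons.prems qs by auto
  have cq: "pauli_string qs' \<in> carrier_mat (2^length ps) (2^length ps)" using ps_carrier[of qs'] l by simp
  have "pauli_string (p#ps) * pauli_string qs = kron (pauli1 p * pauli1 q) (pauli_string ps * pauli_string qs')"
    unfolding qs ps_Cons by (rule kron_mult[OF pauli1_carrier ps_carrier pauli1_carrier cq])
  then have "mtr (pauli_string (p#ps) * pauli_string qs) = mtr (pauli1 p * pauli1 q) * mtr (pauli_string ps * pauli_string qs')"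
    by (simp only: trace_kron[OF mult_carrier_mat[OF pauli1_carrier pauli1_carrier] mult_carrier_mat[OF ps_carrier cq]])
  also have "\<dots> = (if p = q then 2 else 0) * (if ps = qs' then 2^length ps else 0)"
    using pauli1_tr[OF p q] Cons.IH[OF l s1 s2] by simp
  finally show ?case unfolding qs by simp
qed


lemma map2_pm_set: "length qs = length ps \<Longrightarrow> set ps \<subseteq> {..<4} \<Longrightarrow> set qs \<subseteq> {..<4} \<Longrightarrow>
  set (map2 pm ps qs) \<subseteq> {..<4} \<and> length (map2 pm ps qs) = length ps"
proof (induction ps arbitrary: qs)
  case Nil then show ?case by simp
next
  case (Cons p ps)
  then obtain q qs' where qs: "qs = q # qs'" by (cases qs) auto
  then show ?case using Cons pm_lt[of p q] by auto
qed

definition LS :: "nat \<Rightarrow> nat \<Rightarrow> complex mat list set" where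
  "LS n m = {Ps. length Ps = m \<and> set Ps \<subseteq> paulis n}"

lemma paulis_eq: "paulis n = pauli_string ` {ps. set ps \<subseteq> {..<4} \<and> length ps = n}"
  unfolding paulis_def by blast

lemma paulis_finite: "finite (paulis n)"
  unfolding paulis_eq by (intro finite_imageI finite_lists_length_eq) simp

lemma paulis_ne: "pauli_string (replicate n 0) \<in> paulis n"
  unfolding paulis_def by auto

lemma paulis_card: "card (paulis n) > 0"
  using paulis_finite paulis_ne card_gt_0_iff by blast

lemma paulis_carrier: "P \<in> paulis n \<Longrightarrow> P \<in> carrier_mat (sysdim n) (sysdim n)"
  unfolding paulis_def sysdim_def using ps_carrier by blast

lemma paulis_sq: "P \<in> paulis n \<Longrightarrow> P * P = 1\<^sub>m (sysdim n)"
  unfolding paulis_def sysdim_def using ps_sq by blast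

lemma paulis_herm: "P \<in> paulis n \<Longrightarrow> herm P"
  unfolding paulis_def using ps_herm by blast

definition pgood :: "nat \<Rightarrow> complex mat \<Rightarrow> complex mat \<Rightarrow> complex mat \<Rightarrow> bool" where
  "pgood n Q P R \<longleftrightarrow> R \<in> paulis n \<and> (\<exists>c c'. Q * P = c \<cdot>\<^sub>m R \<and> P * Q = c' \<cdot>\<^sub>m R \<and> (c*c')^2 = 1)"

lemma paulis_mult: "P \<in> paulis n \<Longrightarrow> Q \<in> paulis n \<Longrightarrow> \<exists>R. pgood n Q P R"
proof -
  assume "P \<in> paulis n" "Q \<in> paulis n"
  then obtain ps qs where P: "P = pauli_string ps" "length ps = n" "set ps \<subseteq> {..<4}"
    and Q: "Q = pauli_string qs" "length qs = n" "set qs \<subseteq> {..<4}" unfolding paulis_def by blast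
  have l: "length ps = length qs" using P Q by simp
  obtain c c' where cc: "pauli_string qs * pauli_string ps = c \<cdot>\<^sub>m pauli_string (map2 pm qs ps)"
    "pauli_string ps * pauli_string qs = c' \<cdot>\<^sub>m pauli_string (map2 pm qs ps)" "(c*c')^2 = 1"
    using ps_mult[OF l Q(3) P(3)] by blast
  have "pauli_string (map2 pm qs ps) \<in> paulis n"
    unfolding paulis_def
    apply (rule CollectI)
    apply (rule exI[of _ "map2 pm qs ps"])
    using map2_pm_set[OF l Q(3) P(3)] Q(2) by simp
  then show ?thesis unfolding pgood_def P(1) Q(1) using cc by blast
qed

lemma paulis_scalar: assumes P: "P \<in> paulis n" and R: "R \<in> paulis n" and e: "P = \<mu> \<cdot>\<^sub>m R"
  shows "P = R"
proof (rule ccontr)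
  assume ne: "P \<noteq> R"
  obtain ps rs where Pd: "P = pauli_string ps" "length ps = n" "set ps \<subseteq> {..<4}"
    and Rd: "R = pauli_string rs" "length rs = n" "set rs \<subseteq> {..<4}" using P R unfolding paulis_def by blast
  have "ps \<noteq> rs" using ne Pd Rd by auto
  then have t0: "mtr (R * P) = 0" using ps_tr[of ps rs] Pd Rd by simp
  have cP: "P \<in> carrier_mat (sysdim n) (sysdim n)" and cR: "R \<in> carrier_mat (sysdim n) (sysdim n)"
    using paulis_carrier P R by auto
  have "P * P = \<mu> \<cdot>\<^sub>m (R * P)" by (subst (1) e) (rule mult_smult_assoc_mat[OF cR cP])
  then have "mtr (P * P) = \<mu> * mtr (R * P)" using mtr_smult[OF mult_carrier_mat[OF cR cP]] by simp
  also have "\<dots> = 0" using t0 by simp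
  finally have "mtr (1\<^sub>m (sysdim n)) = 0" using paulis_sq[OF P] by simp
  then show False by (simp add: mtr_one sysdim_def)
qed

definition gp :: "nat \<Rightarrow> complex mat \<Rightarrow> complex mat \<Rightarrow> complex mat" where
  "gp n Q P = (SOME R. pgood n Q P R)"

lemma gp_good: "P \<in> paulis n \<Longrightarrow> Q \<in> paulis n \<Longrightarrow> pgood n Q P (gp n Q P)"
  unfolding gp_def using paulis_mult by (metis someI_ex)

lemma gp_in: "P \<in> paulis n \<Longrightarrow> Q \<in> paulis n \<Longrightarrow> gp n Q P \<in> paulis n"
  using gp_good unfolding pgood_def by blast

lemma paulis_back: assumes Q: "Q \<in> paulis n" and X: "X \<in> carrier_mat (sysdim n) (sysdim n)"
  and R: "R \<in> carrier_mat (sysdim n) (sysdim n)" and e: "Q * X = c \<cdot>\<^sub>m R"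
  shows "X = c \<cdot>\<^sub>m (Q * R)"
proof -
  have cQ: "Q \<in> carrier_mat (sysdim n) (sysdim n)" using paulis_carrier[OF Q] .
  have "X = (Q * Q) * X" using paulis_sq[OF Q] X by simp
  also have "\<dots> = Q * (Q * X)" by (rule assoc_mult_mat[OF cQ cQ X])
  also have "\<dots> = c \<cdot>\<^sub>m (Q * R)" unfolding e by (rule mult_smult_distrib[OF cQ R])
  finally show ?thesis .
qed

lemma gp_inj: assumes P1: "P1 \<in> paulis n" and P2: "P2 \<in> paulis n" and Q: "Q \<in> paulis n"
  and e: "gp n Q P1 = gp n Q P2" shows "P1 = P2"
proof -
  let ?R = "gp n Q P1"
  obtain c1 c1' where c1: "Q * P1 = c1 \<cdot>\<^sub>m ?R" "(c1*c1')^2 = 1" using gp_good[OF P1 Q] unfolding pgood_def by blast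
  obtain c2 c2' where c2: "Q * P2 = c2 \<cdot>\<^sub>m ?R" "(c2*c2')^2 = 1" using gp_good[OF P2 Q] e unfolding pgood_def by auto
  have nz: "c2 \<noteq> 0" using c2(2) by auto
  have cQ: "Q \<in> carrier_mat (sysdim n) (sysdim n)" and cP1: "P1 \<in> carrier_mat (sysdim n) (sysdim n)"
    and cP2: "P2 \<in> carrier_mat (sysdim n) (sysdim n)" and cR: "?R \<in> carrier_mat (sysdim n) (sysdim n)"
    using paulis_carrier P1 P2 Q gp_in[OF P1 Q] by auto
  have b1: "P1 = c1 \<cdot>\<^sub>m (Q * ?R)" by (rule paulis_back[OF Q cP1 cR c1(1)])
  have b2: "P2 = c2 \<cdot>\<^sub>m (Q * ?R)" by (rule paulis_back[OF Q cP2 cR c2(1)])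
  have "P1 = (c1 / c2) \<cdot>\<^sub>m (c2 \<cdot>\<^sub>m (Q * ?R))" using nz b1 by (simp add: smult_smult_m)
  then have "P1 = (c1 / c2) \<cdot>\<^sub>m P2" using b2 by simp
  then show ?thesis using paulis_scalar[OF P1 P2] by blast
qed

lemma tw_Nil: "twirl_op [] = 1\<^sub>m 1" by (simp add: twirl_op_def)
lemma tw_Cons: "twirl_op (P#Ps) = kron (kron P P) (twirl_op Ps)" by (simp add: twirl_op_def)

lemma LS_Cons: "P # Ps \<in> LS n (Suc m) \<longleftrightarrow> P \<in> paulis n \<and> Ps \<in> LS n m"
  unfolding LS_def by auto

lemma tw_carrier: "Ps \<in> LS n m \<Longrightarrow> twirl_op Ps \<in> carrier_mat ((sysdim n * sysdim n)^m) ((sysdim n * sysdim n)^m)"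
proof (induction Ps arbitrary: m)
  case Nil then show ?case by (simp add: tw_Nil LS_def)
next
  case (Cons P Ps)
  then obtain m' where m: "m = Suc m'" unfolding LS_def by auto
  then have P: "P \<in> paulis n" and Ps: "Ps \<in> LS n m'" using Cons.prems LS_Cons by auto
  have "kron (kron P P) (twirl_op Ps) \<in> carrier_mat ((sysdim n * sysdim n) * (sysdim n * sysdim n)^m') ((sysdim n * sysdim n) * (sysdim n * sysdim n)^m')"
    by (intro kron_carrier paulis_carrier[OF P] Cons.IH[OF Ps])
  then show ?case unfolding tw_Cons m by simp
qed

lemma tw_herm: "Ps \<in> LS n m \<Longrightarrow> herm (twirl_op Ps)"
proof (induction Ps arbitrary: m)
  case Nil then show ?case by (simp add: tw_Nil herm_one)
next
  case (Cons P Ps)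
  then obtain m' where m: "m = Suc m'" unfolding LS_def by auto
  then have P: "P \<in> paulis n" and Ps: "Ps \<in> LS n m'" using Cons.prems LS_Cons by auto
  have cP: "P \<in> carrier_mat (sysdim n) (sysdim n)" by (rule paulis_carrier[OF P])
  show ?case unfolding tw_Cons
    by (intro herm_kron[OF kron_carrier[OF cP cP] tw_carrier[OF Ps]] herm_kron[OF cP cP] paulis_herm[OF P] Cons.IH[OF Ps])
qed

definition G :: "nat \<Rightarrow> complex mat list \<Rightarrow> complex mat list \<Rightarrow> complex mat list" where
  "G n Qs Ps = map2 (gp n) Qs Ps"

lemma G_Cons: "G n (Q#Qs) (P#Ps) = gp n Q P # G n Qs Ps" by (simp add: G_def)

lemma G_in: "Qs \<in> LS n m \<Longrightarrow> Ps \<in> LS n m \<Longrightarrow> G n Qs Ps \<in> LS n m"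
proof (induction Qs arbitrary: Ps m)
  case Nil then show ?case by (simp add: G_def LS_def)
next
  case (Cons Q Qs)
  then obtain m' where m: "m = Suc m'" unfolding LS_def by auto
  obtain P Ps' where Ps: "Ps = P # Ps'" using Cons.prems m unfolding LS_def by (cases Ps) auto
  have Q: "Q \<in> paulis n" and Qs: "Qs \<in> LS n m'" using Cons.prems m LS_Cons by auto
  have P: "P \<in> paulis n" and Ps': "Ps' \<in> LS n m'" using Cons.prems m Ps LS_Cons by auto
  show ?case unfolding Ps m G_Cons LS_Cons using gp_in[OF P Q] Cons.IH[OF Qs Ps'] by blast
qed

lemma G_inj: "Qs \<in> LS n m \<Longrightarrow> inj_on (G n Qs) (LS n m)"
proof (induction Qs arbitrary: m)
  case Nil then show ?case by (simp add: LS_def inj_on_def)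
next
  case (Cons Q Qs)
  then obtain m' where m: "m = Suc m'" unfolding LS_def by auto
  have Q: "Q \<in> paulis n" and Qs: "Qs \<in> LS n m'" using Cons.prems m LS_Cons by auto
  show ?case unfolding inj_on_def
  proof (intro ballI impI)
    fix X Y assume X: "X \<in> LS n m" and Y: "Y \<in> LS n m" and e: "G n (Q#Qs) X = G n (Q#Qs) Y"
    obtain x X' where Xd: "X = x # X'" using X m unfolding LS_def by (cases X) auto
    obtain y Y' where Yd: "Y = y # Y'" using Y m unfolding LS_def by (cases Y) auto
    have x: "x \<in> paulis n" "X' \<in> LS n m'" using X Xd m LS_Cons by auto
    have y: "y \<in> paulis n" "Y' \<in> LS n m'" using Y Yd m LS_Cons by auto
    have "gp n Q x = gp n Q y" "G n Qs X' = G n Qs Y'" using e unfolding Xd Yd G_Cons by auto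
    then have "x = y" "X' = Y'" using gp_inj[OF x(1) y(1) Q] Cons.IH[OF Qs] x(2) y(2) unfolding inj_on_def by auto
    then show "X = Y" using Xd Yd by simp
  qed
qed

lemma LS_finite: "finite (LS n m)"
proof -
  have "LS n m = {xs. set xs \<subseteq> paulis n \<and> length xs = m}" unfolding LS_def by blast
  then show ?thesis using finite_lists_length_eq[OF paulis_finite] by simp
qed

lemma LS_card: "card (LS n m) = card (paulis n) ^ m"
proof -
  have "LS n m = {xs. set xs \<subseteq> paulis n \<and> length xs = m}" unfolding LS_def by blast
  then show ?thesis using card_lists_length_eq[OF paulis_finite] by simp
qed

lemma G_bij: "Qs \<in> LS n m \<Longrightarrow> G n Qs ` LS n m = LS n m"
  by (rule endo_inj_surj[OF LS_finite]) (use G_in G_inj in auto)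

lemma tw_mult: "Qs \<in> LS n m \<Longrightarrow> Ps \<in> LS n m \<Longrightarrow>
  \<exists>l l'. twirl_op Qs * twirl_op Ps = l \<cdot>\<^sub>m twirl_op (G n Qs Ps) \<and>
         twirl_op Ps * twirl_op Qs = l' \<cdot>\<^sub>m twirl_op (G n Qs Ps) \<and> l * l' = 1"
proof (induction Qs arbitrary: Ps m)
  case Nil then have "Ps = []" unfolding LS_def by simp
  then show ?case by (intro exI[of _ 1]) (simp add: G_def tw_Nil one_smult_m)
next
  case (Cons Q Qs)
  then obtain m' where m: "m = Suc m'" unfolding LS_def by auto
  obtain P Ps' where Ps: "Ps = P # Ps'" using Cons.prems m unfolding LS_def by (cases Ps) auto
  have Q: "Q \<in> paulis n" and Qs: "Qs \<in> LS n m'" using Cons.prems m LS_Cons by auto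
  have P: "P \<in> paulis n" and Ps': "Ps' \<in> LS n m'" using Cons.prems m Ps LS_Cons by auto
  obtain l l' where ll: "twirl_op Qs * twirl_op Ps' = l \<cdot>\<^sub>m twirl_op (G n Qs Ps')"
    "twirl_op Ps' * twirl_op Qs = l' \<cdot>\<^sub>m twirl_op (G n Qs Ps')" "l * l' = 1"
    using Cons.IH[OF Qs Ps'] by blast
  let ?R = "gp n Q P"
  obtain c c' where cc: "Q * P = c \<cdot>\<^sub>m ?R" "P * Q = c' \<cdot>\<^sub>m ?R" "(c*c')^2 = 1"
    using gp_good[OF P Q] unfolding pgood_def by blast
  have cP: "P \<in> carrier_mat (sysdim n) (sysdim n)" and cQ: "Q \<in> carrier_mat (sysdim n) (sysdim n)"
    using paulis_carrier P Q by auto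
  note cPP = kron_carrier[OF cP cP] and cQQ = kron_carrier[OF cQ cQ]
  have e1: "twirl_op (Q#Qs) * twirl_op Ps = (c*c*l) \<cdot>\<^sub>m twirl_op (G n (Q#Qs) Ps)"
  proof -
    have "twirl_op (Q#Qs) * twirl_op Ps = kron (kron Q Q * kron P P) (twirl_op Qs * twirl_op Ps')"
      unfolding Ps tw_Cons by (rule kron_mult[OF cQQ tw_carrier[OF Qs] cPP tw_carrier[OF Ps']])
    also have "kron Q Q * kron P P = kron (Q*P) (Q*P)" by (rule kron_mult[OF cQ cQ cP cP])
    finally show ?thesis unfolding Ps G_Cons tw_Cons cc(1) ll(1) kron_smult_left kron_smult_right smult_smult_m
      by (simp add: mult.commute mult.left_commute)
  qed
  have e2: "twirl_op Ps * twirl_op (Q#Qs) = (c'*c'*l') \<cdot>\<^sub>m twirl_op (G n (Q#Qs) Ps)"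
  proof -
    have "twirl_op Ps * twirl_op (Q#Qs) = kron (kron P P * kron Q Q) (twirl_op Ps' * twirl_op Qs)"
      unfolding Ps tw_Cons by (rule kron_mult[OF cPP tw_carrier[OF Ps'] cQQ tw_carrier[OF Qs]])
    also have "kron P P * kron Q Q = kron (P*Q) (P*Q)" by (rule kron_mult[OF cP cP cQ cQ])
    finally show ?thesis unfolding Ps G_Cons tw_Cons cc(2) ll(2) kron_smult_left kron_smult_right smult_smult_m
      by (simp add: mult.commute mult.left_commute)
  qed
  have "(c*c*l) * (c'*c'*l') = (c*c')^2 * (l*l')" by (simp add: power2_eq_square algebra_simps)
  also have "\<dots> = 1" using cc(3) ll(3) by simp
  finally show ?case using e1 e2 by blast
qed

lemma tw_snoc: "twirl_op (Ps @ [P]) = kron (kron (twirl_op Ps) P) P"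
proof (induction Ps)
  case Nil then show ?case by (simp only: append.simps tw_Cons tw_Nil kron_one_left kron_one_right)
next
  case (Cons Q Qs)
  then show ?case by (simp add: tw_Cons kron_assoc)
qed


definition twl :: "nat \<Rightarrow> nat \<Rightarrow> complex mat \<Rightarrow> complex mat" where
  "twl n m U = mat ((sysdim n * sysdim n)^m) ((sysdim n * sysdim n)^m) (\<lambda>(a,b).
     (1 / of_nat (card (paulis n) ^ m)) * (\<Sum>Ps \<in> LS n m. (twirl_op Ps * U * twirl_op Ps) $$ (a,b)))"

lemma pt_twl: "pauli_twirl n k U = twl n (Suc k) U"
  unfolding pauli_twirl_def twl_def ptdim_def LS_def by simp

lemma twl_carrier: "twl n m U \<in> carrier_mat ((sysdim n * sysdim n)^m) ((sysdim n * sysdim n)^m)"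
  unfolding twl_def by (rule mat_carrier)

lemma twl_index: "a < (sysdim n * sysdim n)^m \<Longrightarrow> b < (sysdim n * sysdim n)^m \<Longrightarrow>
  twl n m U $$ (a,b) = (1 / of_nat (card (paulis n) ^ m)) * (\<Sum>Ps \<in> LS n m. (twirl_op Ps * U * twirl_op Ps) $$ (a,b))"
  unfolding twl_def by (subst index_mat) auto

lemma prod_entry: "A \<in> carrier_mat n1 n2 \<Longrightarrow> B \<in> carrier_mat n2 n3 \<Longrightarrow> i < n1 \<Longrightarrow> j < n3 \<Longrightarrow>
  (A * B) $$ (i,j) = (\<Sum>x<n2. A $$ (i,x) * B $$ (x,j))"
  by (simp add: scalar_prod_def lessThan_atLeast0)

lemma triple_entry: assumes A: "A \<in> carrier_mat n1 n2" and B: "B \<in> carrier_mat n2 n3" and C: "C \<in> carrier_mat n3 n4"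
  and i: "i < n1" and j: "j < n4"
  shows "(A * B * C) $$ (i,j) = (\<Sum>x<n2. \<Sum>y<n3. A $$ (i,x) * B $$ (x,y) * C $$ (y,j))"
proof -
  have "(A * B * C) $$ (i,j) = (\<Sum>y<n3. (A*B) $$ (i,y) * C $$ (y,j))"
    by (rule prod_entry[OF mult_carrier_mat[OF A B] C i j])
  also have "\<dots> = (\<Sum>y<n3. (\<Sum>x<n2. A $$ (i,x) * B $$ (x,y)) * C $$ (y,j))"
    by (intro sum.cong refl) (simp add: prod_entry[OF A B i])
  also have "\<dots> = (\<Sum>y<n3. \<Sum>x<n2. A $$ (i,x) * B $$ (x,y) * C $$ (y,j))"
    by (simp add: sum_distrib_right)
  also have "\<dots> = (\<Sum>x<n2. \<Sum>y<n3. A $$ (i,x) * B $$ (x,y) * C $$ (y,j))"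
    by (rule sum.swap)
  finally show ?thesis .
qed

lemma sandwich_sum: fixes A :: "complex mat" assumes A: "A \<in> carrier_mat D D" and C: "C \<in> carrier_mat D D"
  and F: "\<And>p. p \<in> X \<Longrightarrow> F p \<in> carrier_mat D D"
  and a: "a < D" and b: "b < D"
  shows "(A * mat D D (\<lambda>(x,y). c * (\<Sum>p\<in>X. F p $$ (x,y))) * C) $$ (a,b) = c * (\<Sum>p\<in>X. (A * F p * C) $$ (a,b))"
proof -
  let ?M = "mat D D (\<lambda>(x,y). c * (\<Sum>p\<in>X. F p $$ (x,y)))"
  have "(A * ?M * C) $$ (a,b) = (\<Sum>x<D. \<Sum>y<D. A $$ (a,x) * ?M $$ (x,y) * C $$ (y,b))"
    by (rule triple_entry[OF A mat_carrier C a b])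
  also have "\<dots> = (\<Sum>x<D. \<Sum>y<D. \<Sum>p\<in>X. c * (A $$ (a,x) * F p $$ (x,y) * C $$ (y,b)))"
    by (intro sum.cong refl) (simp add: sum_distrib_left sum_distrib_right mult_ac)
  also have "\<dots> = (\<Sum>x<D. \<Sum>p\<in>X. \<Sum>y<D. c * (A $$ (a,x) * F p $$ (x,y) * C $$ (y,b)))"
    by (intro sum.cong refl) (rule sum.swap)
  also have "\<dots> = (\<Sum>p\<in>X. \<Sum>x<D. \<Sum>y<D. c * (A $$ (a,x) * F p $$ (x,y) * C $$ (y,b)))"
    by (rule sum.swap)
  also have "\<dots> = c * (\<Sum>p\<in>X. (A * F p * C) $$ (a,b))"
    unfolding sum_distrib_left
    by (intro sum.cong refl) (simp add: triple_entry[OF A F C a b] sum_distrib_left)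
  finally show ?thesis .
qed

lemma one_smult_m': "(1::complex) \<cdot>\<^sub>m A = A" by (rule one_smult_m)

lemma conj_step:
  assumes Q: "Qs \<in> LS n m" and P: "Ps \<in> LS n m" and U: "U \<in> carrier_mat ((sysdim n * sysdim n)^m) ((sysdim n * sysdim n)^m)"
  shows "twirl_op Qs * (twirl_op Ps * U * twirl_op Ps) * twirl_op Qs = twirl_op (G n Qs Ps) * U * twirl_op (G n Qs Ps)"
proof -
  let ?D = "(sysdim n * sysdim n)^m"
  note cQ = tw_carrier[OF Q] and cP = tw_carrier[OF P] and cR = tw_carrier[OF G_in[OF Q P]]
  obtain l l' where ll: "twirl_op Qs * twirl_op Ps = l \<cdot>\<^sub>m twirl_op (G n Qs Ps)"
    "twirl_op Ps * twirl_op Qs = l' \<cdot>\<^sub>m twirl_op (G n Qs Ps)" "l * l' = 1"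
    using tw_mult[OF Q P] by blast
  let ?Q = "twirl_op Qs" and ?P = "twirl_op Ps" and ?R = "twirl_op (G n Qs Ps)"
  have "?Q * (?P * U * ?P) * ?Q = (?Q * ?P) * U * (?P * ?Q)"
    using cQ cP U by (simp add: assoc_mult_mat[of _ ?D ?D _ ?D _ ?D])
  also have "\<dots> = (l \<cdot>\<^sub>m ?R) * U * (l' \<cdot>\<^sub>m ?R)" unfolding ll(1) ll(2) ..
  also have "\<dots> = (l * l') \<cdot>\<^sub>m (?R * U * ?R)"
    using cR U by (simp add: mult_smult_assoc_mat[of _ ?D ?D] mult_smult_distrib[of _ ?D ?D] smult_smult_m mult.commute)
  also have "\<dots> = ?R * U * ?R" using ll(3) by (simp add: one_smult_m)
  finally show ?thesis .
qed

lemma twl_idem: assumes U: "U \<in> carrier_mat ((sysdim n * sysdim n)^m) ((sysdim n * sysdim n)^m)"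
  shows "twl n m (twl n m U) = twl n m U"
proof (rule eq_matI)
  let ?D = "(sysdim n * sysdim n)^m"
  let ?c = "1 / of_nat (card (paulis n) ^ m) :: complex"
  let ?f = "\<lambda>Ps. twirl_op Ps * U * twirl_op Ps"
  fix a b assume "a < dim_row (twl n m U)" "b < dim_col (twl n m U)"
  then have a: "a < ?D" and b: "b < ?D" using twl_carrier[of n m U] by auto
  have fc: "?f Ps \<in> carrier_mat ?D ?D" if "Ps \<in> LS n m" for Ps
    using tw_carrier[OF that] U by (meson mult_carrier_mat)
  have inner: "(twirl_op Qs * twl n m U * twirl_op Qs) $$ (a,b) = twl n m U $$ (a,b)" if Q: "Qs \<in> LS n m" for Qs
  proof -
    have "(twirl_op Qs * twl n m U * twirl_op Qs) $$ (a,b) = ?c * (\<Sum>Ps\<in>LS n m. (twirl_op Qs * ?f Ps * twirl_op Qs) $$ (a,b))"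
      unfolding twl_def[of n m U] by (rule sandwich_sum[OF tw_carrier[OF Q] tw_carrier[OF Q] fc a b])
    also have "(\<Sum>Ps\<in>LS n m. (twirl_op Qs * ?f Ps * twirl_op Qs) $$ (a,b)) = (\<Sum>Ps\<in>LS n m. ?f (G n Qs Ps) $$ (a,b))"
      by (intro sum.cong refl) (simp add: conj_step[OF Q _ U])
    also have "\<dots> = (\<Sum>Rs\<in>G n Qs ` LS n m. ?f Rs $$ (a,b))"
      by (rule sum.reindex[OF G_inj[OF Q], symmetric, unfolded comp_def])
    also have "\<dots> = (\<Sum>Rs\<in>LS n m. ?f Rs $$ (a,b))" unfolding G_bij[OF Q] ..
    finally show ?thesis using twl_index[OF a b] by simp
  qed
  have "twl n m (twl n m U) $$ (a,b) = ?c * (\<Sum>Qs\<in>LS n m. (twirl_op Qs * twl n m U * twirl_op Qs) $$ (a,b))"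
    by (rule twl_index[OF a b])
  also have "\<dots> = ?c * (\<Sum>Qs\<in>LS n m. twl n m U $$ (a,b))" using inner by simp
  also have "\<dots> = (?c * of_nat (card (LS n m))) * twl n m U $$ (a,b)" by simp
  also have "?c * of_nat (card (LS n m)) = 1" unfolding LS_card using paulis_card[of n] by simp
  finally show "twl n m (twl n m U) $$ (a,b) = twl n m U $$ (a,b)" by simp
qed (simp_all add: twl_def)


lemma mv_entry: "M \<in> carrier_mat D D \<Longrightarrow> v \<in> carrier_vec D \<Longrightarrow> i < D \<Longrightarrow>
  (M *\<^sub>v v) $ i = (\<Sum>j<D. M $$ (i,j) * v $ j)"
  by (simp add: scalar_prod_def lessThan_atLeast0)

lemma cdot_entry: "v \<in> carrier_vec D \<Longrightarrow> w \<in> carrier_vec D \<Longrightarrow>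
  conjugate v \<bullet> w = (\<Sum>i<D. cnj (v $ i) * (w $ i :: complex))"
  by (simp add: scalar_prod_def lessThan_atLeast0)

lemma quad_entry: assumes M: "M \<in> carrier_mat D D" and v: "v \<in> carrier_vec D"
  shows "conjugate v \<bullet> (M *\<^sub>v v) = (\<Sum>i<D. \<Sum>j<D. cnj (v $ i) * M $$ (i,j) * (v $ j :: complex))"
proof -
  have "conjugate v \<bullet> (M *\<^sub>v v) = (\<Sum>i<D. cnj (v $ i) * (M *\<^sub>v v) $ i)"
    using M v by (intro cdot_entry) auto
  also have "\<dots> = (\<Sum>i<D. \<Sum>j<D. cnj (v $ i) * M $$ (i,j) * v $ j)"
    by (intro sum.cong refl) (simp add: mv_entry[OF M v] sum_distrib_left mult.assoc)
  finally show ?thesis .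
qed

lemma herm_entry: "herm W \<Longrightarrow> i < dim_row W \<Longrightarrow> j < dim_row W \<Longrightarrow> W $$ (i,j) = cnj (W $$ (j,i))"
  unfolding herm_def by blast

lemma herm_quad: assumes W: "W \<in> carrier_mat D D" and h: "herm W" and v: "v \<in> carrier_vec D" and x: "x \<in> carrier_vec D"
  shows "conjugate v \<bullet> (W *\<^sub>v x) = conjugate (W *\<^sub>v v) \<bullet> x"
proof -
  have "conjugate v \<bullet> (W *\<^sub>v x) = (\<Sum>i<D. cnj (v $ i) * (W *\<^sub>v x) $ i)"
    using W x v by (intro cdot_entry) auto
  also have "\<dots> = (\<Sum>i<D. \<Sum>j<D. cnj (v $ i) * W $$ (i,j) * x $ j)"
    by (intro sum.cong refl) (simp add: mv_entry[OF W x] sum_distrib_left mult.assoc)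
  also have "\<dots> = (\<Sum>j<D. \<Sum>i<D. cnj (v $ i) * W $$ (i,j) * x $ j)"
    by (rule sum.swap)
  also have "\<dots> = (\<Sum>j<D. cnj ((W *\<^sub>v v) $ j) * x $ j)"
  proof (intro sum.cong refl)
    fix j assume j: "j \<in> {..<D}"
    have "cnj ((W *\<^sub>v v) $ j) = (\<Sum>i<D. cnj (W $$ (j,i)) * cnj (v $ i))"
      using j by (simp add: mv_entry[OF W v])
    also have "\<dots> = (\<Sum>i<D. W $$ (i,j) * cnj (v $ i))"
    proof (intro sum.cong refl)
      fix i assume i: "i \<in> {..<D}"
      have "i < dim_row W" "j < dim_row W" using W i j by auto
      then have "W $$ (i,j) = cnj (W $$ (j,i))" by (rule herm_entry[OF h])
      then show "cnj (W $$ (j,i)) * cnj (v $ i) = W $$ (i,j) * cnj (v $ i)" by simp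
    qed
    finally show "(\<Sum>i<D. cnj (v $ i) * W $$ (i,j) * x $ j) = cnj ((W *\<^sub>v v) $ j) * x $ j"
      by (simp add: sum_distrib_right sum_distrib_left mult_ac)
  qed
  also have "\<dots> = conjugate (W *\<^sub>v v) \<bullet> x"
    using W x v by (intro cdot_entry[symmetric]) auto
  finally show ?thesis .
qed

lemma quad_sum: fixes F :: "'b \<Rightarrow> complex mat"
  assumes F: "\<And>p. p \<in> X \<Longrightarrow> F p \<in> carrier_mat D D" and v: "v \<in> carrier_vec D"
  shows "conjugate v \<bullet> (mat D D (\<lambda>(x,y). c * (\<Sum>p\<in>X. F p $$ (x,y))) *\<^sub>v v) = c * (\<Sum>p\<in>X. conjugate v \<bullet> (F p *\<^sub>v v))"
proof -
  let ?M = "mat D D (\<lambda>(x,y). c * (\<Sum>p\<in>X. F p $$ (x,y)))"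
  have "conjugate v \<bullet> (?M *\<^sub>v v) = (\<Sum>i<D. \<Sum>j<D. cnj (v $ i) * ?M $$ (i,j) * v $ j)"
    by (rule quad_entry[OF mat_carrier v])
  also have "\<dots> = (\<Sum>i<D. \<Sum>j<D. \<Sum>p\<in>X. c * (cnj (v $ i) * F p $$ (i,j) * v $ j))"
    by (intro sum.cong refl) (simp add: sum_distrib_left sum_distrib_right mult_ac)
  also have "\<dots> = (\<Sum>i<D. \<Sum>p\<in>X. \<Sum>j<D. c * (cnj (v $ i) * F p $$ (i,j) * v $ j))"
    by (intro sum.cong refl) (rule sum.swap)
  also have "\<dots> = (\<Sum>p\<in>X. \<Sum>i<D. \<Sum>j<D. c * (cnj (v $ i) * F p $$ (i,j) * v $ j))"
    by (rule sum.swap)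
  also have "\<dots> = c * (\<Sum>p\<in>X. conjugate v \<bullet> (F p *\<^sub>v v))"
    unfolding sum_distrib_left
    by (intro sum.cong refl) (simp add: quad_entry[OF F v] sum_distrib_left)
  finally show ?thesis .
qed

lemma psd_twl: assumes U: "U \<in> carrier_mat ((sysdim n * sysdim n)^m) ((sysdim n * sysdim n)^m)" and p: "psd U"
  shows "psd (twl n m U)"
proof -
  let ?D = "(sysdim n * sysdim n)^m"
  let ?c = "1 / of_nat (card (paulis n) ^ m) :: complex"
  let ?f = "\<lambda>Ps. twirl_op Ps * U * twirl_op Ps"
  have pU: "conjugate w \<bullet> (U *\<^sub>v w) \<in> \<real> \<and> 0 \<le> Re (conjugate w \<bullet> (U *\<^sub>v w))" if "w \<in> carrier_vec ?D" for w
  proof -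
    obtain d where d: "U \<in> carrier_mat d d" and h: "\<forall>v\<in>carrier_vec d. conjugate v \<bullet> (U *\<^sub>v v) \<in> \<real> \<and> 0 \<le> Re (conjugate v \<bullet> (U *\<^sub>v v))"
      using p unfolding psd_def by blast
    have "d = ?D" using d U by auto
    then show ?thesis using h that by blast
  qed
  have fc: "?f Ps \<in> carrier_mat ?D ?D" if "Ps \<in> LS n m" for Ps
    using tw_carrier[OF that] U by (meson mult_carrier_mat)
  show ?thesis unfolding psd_def
  proof (intro exI[of _ ?D] conjI ballI)
    show "twl n m U \<in> carrier_mat ?D ?D" by (rule twl_carrier)
    fix v :: "complex vec" assume v: "v \<in> carrier_vec ?D"
    have trm: "conjugate v \<bullet> (?f Ps *\<^sub>v v) = conjugate (twirl_op Ps *\<^sub>v v) \<bullet> (U *\<^sub>v (twirl_op Ps *\<^sub>v v))"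
      if Ps: "Ps \<in> LS n m" for Ps
    proof -
      note cW = tw_carrier[OF Ps]
      have "?f Ps *\<^sub>v v = (twirl_op Ps * U) *\<^sub>v (twirl_op Ps *\<^sub>v v)"
        by (rule assoc_mult_mat_vec[OF mult_carrier_mat[OF cW U] cW v])
      also have "\<dots> = twirl_op Ps *\<^sub>v (U *\<^sub>v (twirl_op Ps *\<^sub>v v))"
        by (rule assoc_mult_mat_vec[OF cW U mult_mat_vec_carrier[OF cW v]])
      finally have e: "?f Ps *\<^sub>v v = twirl_op Ps *\<^sub>v (U *\<^sub>v (twirl_op Ps *\<^sub>v v))" .
      show ?thesis unfolding e by (rule herm_quad[OF cW tw_herm[OF Ps] v mult_mat_vec_carrier[OF U mult_mat_vec_carrier[OF cW v]]])
    qed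
    define r where "r Ps = Re (conjugate v \<bullet> (?f Ps *\<^sub>v v))" for Ps
    have tr1: "conjugate v \<bullet> (?f Ps *\<^sub>v v) = complex_of_real (r Ps)" and tr2: "r Ps \<ge> 0" if Ps: "Ps \<in> LS n m" for Ps
    proof -
      have wv: "twirl_op Ps *\<^sub>v v \<in> carrier_vec ?D" using tw_carrier[OF Ps] v by simp
      have "conjugate v \<bullet> (?f Ps *\<^sub>v v) \<in> \<real>" "0 \<le> r Ps" using pU[OF wv] trm[OF Ps] unfolding r_def by simp_all
      then show "conjugate v \<bullet> (?f Ps *\<^sub>v v) = complex_of_real (r Ps)" "r Ps \<ge> 0" unfolding r_def by simp_all
    qed
    have "conjugate v \<bullet> (twl n m U *\<^sub>v v) = ?c * (\<Sum>Ps\<in>LS n m. conjugate v \<bullet> (?f Ps *\<^sub>v v))"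
      unfolding twl_def by (rule quad_sum[OF fc v])
    also have "(\<Sum>Ps\<in>LS n m. conjugate v \<bullet> (?f Ps *\<^sub>v v)) = complex_of_real (\<Sum>Ps\<in>LS n m. r Ps)"
      unfolding of_real_sum by (rule sum.cong[OF refl tr1])
    also have "?c * complex_of_real (\<Sum>Ps\<in>LS n m. r Ps) = complex_of_real ((1 / real (card (paulis n) ^ m)) * (\<Sum>Ps\<in>LS n m. r Ps))"
      by simp
    finally have eq: "conjugate v \<bullet> (twl n m U *\<^sub>v v) = complex_of_real ((1 / real (card (paulis n) ^ m)) * (\<Sum>Ps\<in>LS n m. r Ps))" .
    have nn: "(\<Sum>Ps\<in>LS n m. r Ps) \<ge> 0" using tr2 by (intro sum_nonneg) auto
    show "conjugate v \<bullet> (twl n m U *\<^sub>v v) \<in> \<real>" unfolding eq by simp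
    show "0 \<le> Re (conjugate v \<bullet> (twl n m U *\<^sub>v v))" unfolding eq using nn by simp
  qed
qed


lemma dm: "(l::nat) < d \<Longrightarrow> (i*d+l) div d = i \<and> (i*d+l) mod d = l"
  by simp

lemma K_entry: assumes X: "X \<in> carrier_mat M M" and P: "P \<in> carrier_mat d d"
  and i: "i < M" and l: "l < d" and x1: "x1 < M" and x2: "x2 < d"
  shows "kron X P $$ (i*d+l, x1*d+x2) = X $$ (i,x1) * P $$ (l,x2)"
proof -
  have "i*d+l < dim_row X * dim_row P" "x1*d+x2 < dim_col X * dim_col P"
    using X P idx_lt[OF i l] idx_lt[OF x1 x2] by auto
  then have "kron X P $$ (i*d+l, x1*d+x2) = X $$ ((i*d+l) div d, (x1*d+x2) div d) * P $$ ((i*d+l) mod d, (x1*d+x2) mod d)"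
    using X P by (subst kron_index) auto
  then show ?thesis using dm[OF l, of i] dm[OF x2, of x1] by simp
qed

lemma swap5: "(\<Sum>l\<in>L. \<Sum>a\<in>A. \<Sum>b\<in>B. \<Sum>c\<in>C. \<Sum>e\<in>E. f l a b c e) = (\<Sum>a\<in>A. \<Sum>b\<in>B. \<Sum>c\<in>C. \<Sum>e\<in>E. \<Sum>l\<in>L. (f l a b c e :: complex))"
proof -
  have "(\<Sum>l\<in>L. \<Sum>a\<in>A. \<Sum>b\<in>B. \<Sum>c\<in>C. \<Sum>e\<in>E. f l a b c e) = (\<Sum>a\<in>A. \<Sum>l\<in>L. \<Sum>b\<in>B. \<Sum>c\<in>C. \<Sum>e\<in>E. f l a b c e)"
    by (rule sum.swap)
  also have "\<dots> = (\<Sum>a\<in>A. \<Sum>b\<in>B. \<Sum>l\<in>L. \<Sum>c\<in>C. \<Sum>e\<in>E. f l a b c e)"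
    by (intro sum.cong refl) (rule sum.swap)
  also have "\<dots> = (\<Sum>a\<in>A. \<Sum>b\<in>B. \<Sum>c\<in>C. \<Sum>l\<in>L. \<Sum>e\<in>E. f l a b c e)"
    by (intro sum.cong refl) (rule sum.swap)
  also have "\<dots> = (\<Sum>a\<in>A. \<Sum>b\<in>B. \<Sum>c\<in>C. \<Sum>e\<in>E. \<Sum>l\<in>L. f l a b c e)"
    by (intro sum.cong refl) (rule sum.swap)
  finally show ?thesis .
qed

lemma ptrace_carrier: "d > 0 \<Longrightarrow> A \<in> carrier_mat (M*d) (M*d) \<Longrightarrow> ptrace_last d A \<in> carrier_mat M M"
  unfolding ptrace_last_def by (intro carrier_matI) auto

lemma ptrace_index: "d > 0 \<Longrightarrow> A \<in> carrier_mat (M*d) (M*d) \<Longrightarrow> i < M \<Longrightarrow> j < M \<Longrightarrow>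
  ptrace_last d A $$ (i,j) = (\<Sum>l<d. A $$ (i*d+l, j*d+l))"
  unfolding ptrace_last_def by (subst index_mat) auto

lemma ptrace_sandwich:
  assumes X: "X \<in> carrier_mat M M" and P: "P \<in> carrier_mat d d" and PP: "P * P = 1\<^sub>m d"
    and U: "U \<in> carrier_mat (M*d) (M*d)" and d: "d > 0"
  shows "ptrace_last d (kron X P * U * kron X P) = X * ptrace_last d U * X"
proof -
  let ?K = "kron X P"
  let ?Y = "ptrace_last d U"
  have K: "?K \<in> carrier_mat (M*d) (M*d)" using kron_carrier[OF X P] .
  have Y: "?Y \<in> carrier_mat M M" by (rule ptrace_carrier[OF d U])
  have KUK: "?K * U * ?K \<in> carrier_mat (M*d) (M*d)" using K U by (meson mult_carrier_mat)
  show ?thesis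
  proof (rule eq_matI)
    fix i j assume "i < dim_row (X * ?Y * X)" "j < dim_col (X * ?Y * X)"
    then have i: "i < M" and j: "j < M" using X Y by auto
    have "ptrace_last d (?K * U * ?K) $$ (i,j) = (\<Sum>l<d. (?K * U * ?K) $$ (i*d+l, j*d+l))"
      by (rule ptrace_index[OF d KUK i j])
    also have "\<dots> = (\<Sum>l<d. \<Sum>x<M*d. \<Sum>y<M*d. ?K $$ (i*d+l,x) * U $$ (x,y) * ?K $$ (y,j*d+l))"
      by (intro sum.cong refl) (rule triple_entry[OF K U K], auto intro: idx_lt i j)
    also have "\<dots> = (\<Sum>l<d. \<Sum>x1<M. \<Sum>x2<d. \<Sum>y1<M. \<Sum>y2<d.
        X $$ (i,x1) * P $$ (l,x2) * U $$ (x1*d+x2, y1*d+y2) * (X $$ (y1,j) * P $$ (y2,l)))"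
    proof (rule sum.cong[OF refl])
      fix l assume l: "l \<in> {..<d}"
      have "(\<Sum>x<M*d. \<Sum>y<M*d. ?K $$ (i*d+l,x) * U $$ (x,y) * ?K $$ (y,j*d+l))
          = (\<Sum>x1<M. \<Sum>x2<d. \<Sum>y<M*d. ?K $$ (i*d+l,x1*d+x2) * U $$ (x1*d+x2,y) * ?K $$ (y,j*d+l))"
        by (rule sum_split_mult)
      also have "\<dots> = (\<Sum>x1<M. \<Sum>x2<d. \<Sum>y1<M. \<Sum>y2<d. ?K $$ (i*d+l,x1*d+x2) * U $$ (x1*d+x2,y1*d+y2) * ?K $$ (y1*d+y2,j*d+l))"
        by (rule sum.cong[OF refl], rule sum.cong[OF refl], rule sum_split_mult)
      also have "\<dots> = (\<Sum>x1<M. \<Sum>x2<d. \<Sum>y1<M. \<Sum>y2<d.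
          X $$ (i,x1) * P $$ (l,x2) * U $$ (x1*d+x2, y1*d+y2) * (X $$ (y1,j) * P $$ (y2,l)))"
        using l by (intro sum.cong refl) (simp add: K_entry[OF X P] i j)
      finally show "(\<Sum>x<M*d. \<Sum>y<M*d. ?K $$ (i*d+l,x) * U $$ (x,y) * ?K $$ (y,j*d+l)) = (\<Sum>x1<M. \<Sum>x2<d. \<Sum>y1<M. \<Sum>y2<d.
          X $$ (i,x1) * P $$ (l,x2) * U $$ (x1*d+x2, y1*d+y2) * (X $$ (y1,j) * P $$ (y2,l)))" .
    qed
    also have "\<dots> = (\<Sum>x1<M. \<Sum>x2<d. \<Sum>y1<M. \<Sum>y2<d. \<Sum>l<d.
        X $$ (i,x1) * P $$ (l,x2) * U $$ (x1*d+x2, y1*d+y2) * (X $$ (y1,j) * P $$ (y2,l)))"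
      by (rule swap5)
    also have "\<dots> = (\<Sum>x1<M. \<Sum>x2<d. \<Sum>y1<M. \<Sum>y2<d.
        (X $$ (i,x1) * U $$ (x1*d+x2, y1*d+y2) * X $$ (y1,j)) * (P * P) $$ (y2,x2))"
    proof (intro sum.cong refl)
      fix x1 x2 y1 y2 assume x2: "x2 \<in> {..<d}" and y2: "y2 \<in> {..<d}"
      have "(P * P) $$ (y2,x2) = (\<Sum>l<d. P $$ (y2,l) * P $$ (l,x2))"
        using x2 y2 by (intro prod_entry[OF P P]) auto
      then show "(\<Sum>l<d. X $$ (i,x1) * P $$ (l,x2) * U $$ (x1*d+x2, y1*d+y2) * (X $$ (y1,j) * P $$ (y2,l))) =
        (X $$ (i,x1) * U $$ (x1*d+x2, y1*d+y2) * X $$ (y1,j)) * (P * P) $$ (y2,x2)"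
        by (simp add: sum_distrib_left mult_ac)
    qed
    also have "\<dots> = (\<Sum>x1<M. \<Sum>x2<d. \<Sum>y1<M. X $$ (i,x1) * U $$ (x1*d+x2, y1*d+x2) * X $$ (y1,j))"
    proof (intro sum.cong refl)
      fix x1 x2 y1 assume x2: "x2 \<in> {..<d}"
      have "(\<Sum>y2<d. (X $$ (i,x1) * U $$ (x1*d+x2, y1*d+y2) * X $$ (y1,j)) * (P * P) $$ (y2,x2))
        = (\<Sum>y2<d. if y2 = x2 then X $$ (i,x1) * U $$ (x1*d+x2, y1*d+y2) * X $$ (y1,j) else 0)"
        using x2 unfolding PP by (intro sum.cong refl) auto
      also have "\<dots> = X $$ (i,x1) * U $$ (x1*d+x2, y1*d+x2) * X $$ (y1,j)"
        using x2 by (simp add: sum.delta')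
      finally show "(\<Sum>y2<d. (X $$ (i,x1) * U $$ (x1*d+x2, y1*d+y2) * X $$ (y1,j)) * (P * P) $$ (y2,x2))
        = X $$ (i,x1) * U $$ (x1*d+x2, y1*d+x2) * X $$ (y1,j)" .
    qed
    also have "\<dots> = (\<Sum>x1<M. \<Sum>y1<M. \<Sum>x2<d. X $$ (i,x1) * U $$ (x1*d+x2, y1*d+x2) * X $$ (y1,j))"
      by (rule sum.cong[OF refl], rule sum.swap)
    also have "\<dots> = (\<Sum>x1<M. \<Sum>y1<M. X $$ (i,x1) * ?Y $$ (x1,y1) * X $$ (y1,j))"
    proof (intro sum.cong refl)
      fix x1 y1 assume x1: "x1 \<in> {..<M}" and y1: "y1 \<in> {..<M}"
      have "?Y $$ (x1,y1) = (\<Sum>x2<d. U $$ (x1*d+x2, y1*d+x2))"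
        using x1 y1 by (intro ptrace_index[OF d U]) auto
      then show "(\<Sum>x2<d. X $$ (i,x1) * U $$ (x1*d+x2, y1*d+x2) * X $$ (y1,j)) = X $$ (i,x1) * ?Y $$ (x1,y1) * X $$ (y1,j)"
        by (simp add: sum_distrib_left sum_distrib_right)
    qed
    also have "\<dots> = (X * ?Y * X) $$ (i,j)"
      by (rule triple_entry[OF X Y X i j, symmetric])
    finally show "ptrace_last d (?K * U * ?K) $$ (i,j) = (X * ?Y * X) $$ (i,j)" .
  next
    show "dim_row (ptrace_last d (?K * U * ?K)) = dim_row (X * ?Y * X)"
      using ptrace_carrier[OF d KUK] X by auto
    show "dim_col (ptrace_last d (?K * U * ?K)) = dim_col (X * ?Y * X)"
      using ptrace_carrier[OF d KUK] X by auto
  qed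
qed


lemma snoc_reindex: "(\<Sum>Ps\<in>LS n (Suc j). f Ps) = (\<Sum>Ps'\<in>LS n j. \<Sum>P\<in>paulis n. f (Ps' @ [P]))"
proof -
  let ?h = "\<lambda>(a,b). a @ [b :: complex mat]"
  have inj: "inj_on ?h (LS n j \<times> paulis n)" by (auto simp: inj_on_def)
  have img: "?h ` (LS n j \<times> paulis n) = LS n (Suc j)"
  proof
    show "?h ` (LS n j \<times> paulis n) \<subseteq> LS n (Suc j)" by (auto simp: LS_def)
    show "LS n (Suc j) \<subseteq> ?h ` (LS n j \<times> paulis n)"
    proof
      fix Ps assume Ps: "Ps \<in> LS n (Suc j)"
      then have ne: "Ps \<noteq> []" unfolding LS_def by auto
      have "Ps = butlast Ps @ [last Ps]" using ne by simp
      moreover have "butlast Ps \<in> LS n j" "last Ps \<in> paulis n"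
        using Ps ne unfolding LS_def by (auto simp: in_set_butlastD)
      ultimately show "Ps \<in> ?h ` (LS n j \<times> paulis n)" by (metis (no_types, lifting) SigmaI case_prod_conv image_eqI)
    qed
  qed
  have "(\<Sum>Ps\<in>LS n (Suc j). f Ps) = (\<Sum>x\<in>LS n j \<times> paulis n. f (?h x))"
    unfolding img[symmetric] by (rule sum.reindex[OF inj, unfolded comp_def])
  also have "\<dots> = (\<Sum>Ps'\<in>LS n j. \<Sum>P\<in>paulis n. f (Ps' @ [P]))"
    by (simp add: sum.cartesian_product split_def)
  finally show ?thesis .
qed

lemma twl_ptrace:
  fixes n j :: nat
  defines "s \<equiv> sysdim n"
  assumes V: "V \<in> carrier_mat ((s*s)^Suc j) ((s*s)^Suc j)" and B: "B \<in> carrier_mat ((s*s)^j) ((s*s)^j)"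
    and h: "ptrace_last s V = kron B (1\<^sub>m s)"
  shows "ptrace_last s (twl n (Suc j) V) = kron (twl n j B) (1\<^sub>m s)"
proof -
  define M where "M = (s*s)^j * s"
  have spos: "s > 0" unfolding s_def sysdim_def by simp
  have MS: "(s*s)^Suc j = M * s" unfolding M_def by (simp add: mult_ac)
  have V': "V \<in> carrier_mat (M*s) (M*s)" using V unfolding MS .
  let ?c1 = "1 / of_nat (card (paulis n) ^ Suc j) :: complex"
  let ?c0 = "1 / of_nat (card (paulis n) ^ j) :: complex"
  let ?f = "\<lambda>Ps. twirl_op Ps * V * twirl_op Ps"
  have T: "twl n (Suc j) V \<in> carrier_mat (M*s) (M*s)" using twl_carrier[of n "Suc j" V] unfolding s_def[symmetric] MS .
  have fc: "?f Ps \<in> carrier_mat (M*s) (M*s)" if "Ps \<in> LS n (Suc j)" for Ps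
    using tw_carrier[OF that] V' unfolding s_def[symmetric] MS by (meson mult_carrier_mat)
  have key: "ptrace_last s (?f (Ps' @ [P])) = kron (twirl_op Ps' * B * twirl_op Ps') (1\<^sub>m s)"
    if Ps': "Ps' \<in> LS n j" and P: "P \<in> paulis n" for Ps' P
  proof -
    have cW: "twirl_op Ps' \<in> carrier_mat ((s*s)^j) ((s*s)^j)" using tw_carrier[OF Ps'] unfolding s_def .
    have cP: "P \<in> carrier_mat s s" using paulis_carrier[OF P] unfolding s_def .
    have PP: "P * P = 1\<^sub>m s" using paulis_sq[OF P] unfolding s_def .
    have X: "kron (twirl_op Ps') P \<in> carrier_mat M M" using kron_carrier[OF cW cP] unfolding M_def .
    have "ptrace_last s (?f (Ps' @ [P])) = kron (twirl_op Ps') P * kron B (1\<^sub>m s) * kron (twirl_op Ps') P"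
      unfolding tw_snoc h[symmetric] by (rule ptrace_sandwich[OF X cP PP V' spos])
    also have "kron (twirl_op Ps') P * kron B (1\<^sub>m s) = kron (twirl_op Ps' * B) (P * 1\<^sub>m s)"
      by (rule kron_mult[OF cW cP B one_carrier_mat])
    also have "P * 1\<^sub>m s = P" using cP by simp
    also have "kron (twirl_op Ps' * B) P * kron (twirl_op Ps') P = kron (twirl_op Ps' * B * twirl_op Ps') (P * P)"
      by (rule kron_mult[OF mult_carrier_mat[OF cW B] cP cW cP])
    finally show ?thesis unfolding PP .
  qed
  show ?thesis
  proof (rule eq_matI)
    fix a b assume "a < dim_row (kron (twl n j B) (1\<^sub>m s))" "b < dim_col (kron (twl n j B) (1\<^sub>m s))"
    then have a: "a < M" and b: "b < M" using twl_carrier[of n j B] unfolding M_def s_def by auto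
    have ab: "a div s < (s*s)^j" "b div s < (s*s)^j" "a mod s < s" "b mod s < s"
      using div_mod_lt[of a "(s*s)^j" s] div_mod_lt[of b "(s*s)^j" s] a b unfolding M_def by auto
    let ?g = "\<lambda>Ps'. (twirl_op Ps' * B * twirl_op Ps') $$ (a div s, b div s) * 1\<^sub>m s $$ (a mod s, b mod s)"
    have "ptrace_last s (twl n (Suc j) V) $$ (a,b) = (\<Sum>l<s. twl n (Suc j) V $$ (a*s+l, b*s+l))"
      by (rule ptrace_index[OF spos T a b])
    also have "\<dots> = (\<Sum>l<s. ?c1 * (\<Sum>Ps\<in>LS n (Suc j). ?f Ps $$ (a*s+l, b*s+l)))"
    proof (rule sum.cong[OF refl])
      fix l assume l: "l \<in> {..<s}"
      have b1: "a*s+l < M*s" and b2: "b*s+l < M*s" using idx_lt[OF a, of l s] idx_lt[OF b, of l s] l by auto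
      have MS': "(sysdim n * sysdim n)^Suc j = M * sysdim n" using MS unfolding s_def .
      show "twl n (Suc j) V $$ (a*s+l, b*s+l) = ?c1 * (\<Sum>Ps\<in>LS n (Suc j). ?f Ps $$ (a*s+l, b*s+l))"
        using b1 b2 unfolding s_def MS'[symmetric]
        by (rule twl_index)
    qed
    also have "\<dots> = ?c1 * (\<Sum>Ps\<in>LS n (Suc j). \<Sum>l<s. ?f Ps $$ (a*s+l, b*s+l))"
      by (simp add: sum_distrib_left sum.swap[of _ "{..<s}"])
    also have "\<dots> = ?c1 * (\<Sum>Ps\<in>LS n (Suc j). ptrace_last s (?f Ps) $$ (a,b))"
      by (intro arg_cong[where f="\<lambda>x. ?c1 * x"] sum.cong refl ptrace_index[OF spos fc a b, symmetric])
    also have "\<dots> = ?c1 * (\<Sum>Ps'\<in>LS n j. \<Sum>P\<in>paulis n. ptrace_last s (?f (Ps' @ [P])) $$ (a,b))"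
      by (simp only: snoc_reindex)
    also have "\<dots> = ?c1 * (\<Sum>Ps'\<in>LS n j. \<Sum>P\<in>paulis n. ?g Ps')"
    proof -
      have "ptrace_last s (?f (Ps' @ [P])) $$ (a,b) = ?g Ps'" if "Ps' \<in> LS n j" "P \<in> paulis n" for Ps' P
      proof -
        have cW: "twirl_op Ps' * B * twirl_op Ps' \<in> carrier_mat ((s*s)^j) ((s*s)^j)"
          using tw_carrier[OF that(1)] B unfolding s_def[symmetric] by (meson mult_carrier_mat)
        show ?thesis unfolding key[OF that] using a b cW unfolding M_def by (subst kron_index) auto
      qed
      then show ?thesis by simp
    qed
    also have "\<dots> = (?c1 * of_nat (card (paulis n))) * (\<Sum>Ps'\<in>LS n j. ?g Ps')"
      by (simp add: sum_distrib_left mult_ac)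
    also have "?c1 * of_nat (card (paulis n)) = ?c0"
      using paulis_card[of n] by (simp add: field_simps)
    also have "?c0 * (\<Sum>Ps'\<in>LS n j. ?g Ps') = twl n j B $$ (a div s, b div s) * 1\<^sub>m s $$ (a mod s, b mod s)"
      using twl_index[of "a div s" n j "b div s" B] ab unfolding s_def by (simp add: sum_distrib_right mult_ac)
    also have "\<dots> = kron (twl n j B) (1\<^sub>m s) $$ (a,b)"
      using a b twl_carrier[of n j B] unfolding M_def s_def by (subst kron_index) auto
    finally show "ptrace_last s (twl n (Suc j) V) $$ (a,b) = kron (twl n j B) (1\<^sub>m s) $$ (a,b)" .
  next
    show "dim_row (ptrace_last s (twl n (Suc j) V)) = dim_row (kron (twl n j B) (1\<^sub>m s))"
      using ptrace_carrier[OF spos T] twl_carrier[of n j B] unfolding M_def s_def by simp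
    show "dim_col (ptrace_last s (twl n (Suc j) V)) = dim_col (kron (twl n j B) (1\<^sub>m s))"
      using ptrace_carrier[OF spos T] twl_carrier[of n j B] unfolding M_def s_def by simp
  qed
qed


lemma LS_0: "LS n 0 = {[]}" unfolding LS_def by auto

lemma twl0_one: "twl n 0 (1\<^sub>m 1) = 1\<^sub>m 1"
proof (rule eq_matI)
  fix a b assume "a < dim_row (1\<^sub>m 1 :: complex mat)" "b < dim_col (1\<^sub>m 1 :: complex mat)"
  then have a: "a = 0" and b: "b = 0" by auto
  show "twl n 0 (1\<^sub>m 1) $$ (a,b) = 1\<^sub>m 1 $$ (a,b)"
    unfolding a b by (subst twl_index) (auto simp: LS_0 tw_Nil)
qed (auto simp: twl_def)

lemma causal_twl: assumes c: "causal n k U" shows "causal n k (pauli_twirl n k U)"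
proof -
  obtain Ups where U: "Ups k = U" and car: "\<forall>j\<le>k. Ups j \<in> carrier_mat (ptdim n j) (ptdim n j)"
    and b0: "ptrace_last (sysdim n) (Ups 0) = 1\<^sub>m (sysdim n)"
    and st: "\<forall>j. 1 \<le> j \<and> j \<le> k \<longrightarrow> ptrace_last (sysdim n) (Ups j) = kron (Ups (j - 1)) (1\<^sub>m (sysdim n))"
    using c unfolding causal_def by blast
  define Ups' where "Ups' j = pauli_twirl n j (Ups j)" for j
  have pd: "ptdim n j = (sysdim n * sysdim n)^Suc j" for j unfolding ptdim_def ..
  show ?thesis unfolding causal_def
  proof (intro exI[of _ Ups'] conjI allI impI)
    show "Ups' k = pauli_twirl n k U" unfolding Ups'_def U ..
    fix j assume "j \<le> k"
    show "Ups' j \<in> carrier_mat (ptdim n j) (ptdim n j)" unfolding Ups'_def pauli_twirl_def by (rule mat_carrier)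
  next
    have V: "Ups 0 \<in> carrier_mat ((sysdim n * sysdim n)^Suc 0) ((sysdim n * sysdim n)^Suc 0)"
      using car pd[of 0] by auto
    have B: "(1\<^sub>m 1 :: complex mat) \<in> carrier_mat ((sysdim n * sysdim n)^0) ((sysdim n * sysdim n)^0)" by simp
    have h: "ptrace_last (sysdim n) (Ups 0) = kron (1\<^sub>m 1) (1\<^sub>m (sysdim n))" unfolding b0 kron_one_left ..
    show "ptrace_last (sysdim n) (Ups' 0) = 1\<^sub>m (sysdim n)"
      unfolding Ups'_def pt_twl twl_ptrace[OF V B h] twl0_one kron_one_left ..
  next
    fix j assume j: "1 \<le> j \<and> j \<le> k"
    then obtain i where ji: "j = Suc i" by (cases j) auto
    have V: "Ups j \<in> carrier_mat ((sysdim n * sysdim n)^Suc j) ((sysdim n * sysdim n)^Suc j)"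
      using car pd[of j] j by auto
    have "i \<le> k" using j ji by simp
    then have "Ups i \<in> carrier_mat (ptdim n i) (ptdim n i)" using car by blast
    then have B: "Ups i \<in> carrier_mat ((sysdim n * sysdim n)^j) ((sysdim n * sysdim n)^j)"
      unfolding pd ji .
    have h: "ptrace_last (sysdim n) (Ups j) = kron (Ups i) (1\<^sub>m (sysdim n))" using st j ji by auto
    show "ptrace_last (sysdim n) (Ups' j) = kron (Ups' (j - 1)) (1\<^sub>m (sysdim n))"
      unfolding Ups'_def pt_twl twl_ptrace[OF V B h] using ji by simp
  qed
qed

theorem proposition1:
  fixes n k :: nat
  shows "(\<forall>U. valid_process_tensor n k U \<longrightarrow> valid_process_tensor n k (pauli_twirl n k U))
    \<and> (\<forall>U \<in> carrier_mat (ptdim n k) (ptdim n k).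
          pauli_twirl n k (pauli_twirl n k U) = pauli_twirl n k U)
    \<and> (\<forall>U. causal n k U \<longrightarrow> causal n k (pauli_twirl n k U))"
proof (intro conjI allI impI ballI)
  have pd: "ptdim n k = (sysdim n * sysdim n)^Suc k" unfolding ptdim_def ..
  fix U assume v: "valid_process_tensor n k U"
  then have p: "psd U" and c: "causal n k U" unfolding valid_process_tensor_def by auto
  from c obtain Ups where "Ups k = U" "\<forall>j\<le>k. Ups j \<in> carrier_mat (ptdim n j) (ptdim n j)"
    unfolding causal_def by blast
  then have cU: "U \<in> carrier_mat ((sysdim n * sysdim n)^Suc k) ((sysdim n * sysdim n)^Suc k)" using pd by auto
  show "valid_process_tensor n k (pauli_twirl n k U)"
    unfolding valid_process_tensor_def using psd_twl[OF cU p] causal_twl[OF c] by (simp add: pt_twl)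
next
  fix U :: "complex mat" assume "U \<in> carrier_mat (ptdim n k) (ptdim n k)"
  then have cU: "U \<in> carrier_mat ((sysdim n * sysdim n)^Suc k) ((sysdim n * sysdim n)^Suc k)" unfolding ptdim_def .
  show "pauli_twirl n k (pauli_twirl n k U) = pauli_twirl n k U" unfolding pt_twl by (rule twl_idem[OF cU])
next
  fix U assume "causal n k U"
  then show "causal n k (pauli_twirl n k U)" by (rule causal_twl)
qed

end
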